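(* Let $\pi$ be a supercuspidal representation of $G$ with trivial central character and $a(\pi)=4n$, $n\ge1$, let $T=T_\alpha$ be an inert torus in canonical form, and let $W_0\in\mathcal W(\pi,\psi)$ be a minimal vector for $T$ in the Whittaker model of $\pi$. Put $\mathfrak a=-a_{\theta_\pi,T}\alpha\in\mathfrak o^\times$. Then there is a constant $c\in\mathbb{C}$ such that for all $y\in F^\times$, $W_0(a(y))=c$ if $y\in\varpi^{-2n}\mathfrak aU_n$ and $W_0(a(y))=0$ otherwise.
   Context: $F$ is a non-archimedean local field of characteristic zero with ring of integers $\mathfrak o$, maximal ideal $\mathfrak p$, uniformizer $\varpi$, odd residue cardinality; $U_m=\{x\in\mathfrak o^\times:v(x-1)\ge m\}$; $E$ the unramified quadratic extension; $G=\mathrm{GL}_2(F)$, $Z$ its centre, $a(y)=\mathrm{diag}(y,1)$, $n(x)=\begin{pmatrix}1&x\\0&1\end{pmatrix}$. $\psi$ is an additive character of $F$ trivial on $\mathfrak o$ but not $\varpi^{-1}\mathfrak o$, $\psi_E=\psi\circ\mathrm{Tr}_{E/F}$. $\mathcal W(\pi,\psi)$ is the Whittaker model: the unique space of functions $W$ on $G$ with $W(n(x)g)=\psi(x)W(g)$, stable under right translation, realizing $\pi$. $a(\pi)$ is the least $r\ge0$ such that $\pi$ has a nonzero vector fixed by $\mathrm{GL}_2(\mathfrak o)\cap\begin{pmatrix}1+\mathfrak p^r&\mathfrak o\\\mathfrak p^r&\mathfrak o\end{pmatrix}$; for a character $\chi$ of $E^\times$, $a(\chi)$ is the least $m\ge0$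 with $\chi$ trivial on $\{x\in\mathfrak o_E^\times:v(x-1)\ge m\}$. Inert torus in canonical form: $T=T_\alpha=\{\begin{pmatrix}x&y\\-\alpha y&x\end{pmatrix}\ne0\}$, $\alpha\in\mathfrak o^\times$, $-\alpha$ non-square, identified with $E^\times$ via $x+y\sqrt{-\alpha}\mapsto\begin{pmatrix}x&y\\-\alpha y&x\end{pmatrix}$; $w_\alpha=\begin{pmatrix}0&1\\-\alpha&0\end{pmatrix}$; $K(n)=\{g\in\mathrm{GL}_2(\mathfrak o):g\equiv1\bmod\mathfrak p^n\}$; $K_T(n)=\{\begin{pmatrix}a&b\\c&d\end{pmatrix}\in\mathrm{GL}_2(\mathfrak o):a-d,\ c+b\alpha\in\mathfrak p^n\}$, $ZK_T(n)=TK(n)$. For $\theta$ a character of $E^\times$ with $a(\theta)=2n$, $\theta|_{F^\times}=1$, $a_{\theta,T}\in\mathfrak o^\times$ is a fixed element with $\psi_E(\varpi^{-n}a_{\theta,T}\sqrt{-\alpha}u)=\theta(1+\varpi^nu)$ for $u\in\mathfrak o_E$, and $\chi_{\theta,T}(t(1+\varpi^ng))=\theta(t)\psi(\varpi^{-n}a_{\theta,T}\mathrm{Tr}(w_\alpha g))$ is a character of $ZK_T(n)$. There is a character $\theta_\pi$ of $E^\times$ with $a(\theta_\pi)=2n$, $\theta_\pi|_{F^\times}=1$ and $\pi\simeq c\text{-}\mathrm{Ind}_{ZK_T(n)}^G\chi_{\theta_\pi,T}$ for all such $T$; fix it. A minimal vector for $T$ is a nonzero $v\in\pi$ with $\pi(k)v=\chi_{\theta_\pi,T}(k)v$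 for all $k\in ZK_T(n)$. *)

theory Defs
  imports Complex_Main
begin

type_synonym 'a m2 = "'a \<times> 'a \<times> 'a \<times> 'a"  (* (a,b,c,d) = [[a,b],[c,d]] *)

definition m2mult :: "'a::comm_ring_1 m2 \<Rightarrow> 'a m2 \<Rightarrow> 'a m2" where
  "m2mult = (\<lambda>(a,b,c,d) (a',b',c',d').
      (a*a' + b*c', a*b' + b*d', c*a' + d*c', c*b' + d*d'))"

definition m2add :: "'a::comm_ring_1 m2 \<Rightarrow> 'a m2 \<Rightarrow> 'a m2" where
  "m2add = (\<lambda>(a,b,c,d) (a',b',c',d'). (a+a', b+b', c+c', d+d'))"

definition m2smul :: "'a::comm_ring_1 \<Rightarrow> 'a m2 \<Rightarrow> 'a m2" where
  "m2smul s = (\<lambda>(a,b,c,d). (s*a, s*b, s*c, s*d))"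

definition m2one :: "'a::comm_ring_1 m2" where "m2one = (1,0,0,1)"

definition m2det :: "'a::comm_ring_1 m2 \<Rightarrow> 'a" where
  "m2det = (\<lambda>(a,b,c,d). a*d - b*c)"

definition m2trace :: "'a::comm_ring_1 m2 \<Rightarrow> 'a" where
  "m2trace = (\<lambda>(a,b,c,d). a + d)"

definition GL2 :: "'a::field m2 set" where "GL2 = {g. m2det g \<noteq> 0}"

definition nmat :: "'a::comm_ring_1 \<Rightarrow> 'a m2" where "nmat x = (1,x,0,1)"
definition amat :: "'a::comm_ring_1 \<Rightarrow> 'a m2" where "amat y = (y,0,0,1)"
definition scal :: "'a::comm_ring_1 \<Rightarrow> 'a m2" where "scal z = (z,0,0,z)"

definition rtrans :: "'a::comm_ring_1 m2 \<Rightarrow> ('a m2 \<Rightarrow> complex) \<Rightarrow> ('a m2 \<Rightarrow> complex)" where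
  "rtrans g f = (\<lambda>h. f (m2mult h g))"

text \<open>The valuation v is only meaningful on nonzero elements; vge v x k means x in p^k.\<close>
definition vge :: "('a::field \<Rightarrow> int) \<Rightarrow> 'a \<Rightarrow> int \<Rightarrow> bool" where
  "vge v x k \<longleftrightarrow> x = 0 \<or> k \<le> v x"

definition ounit :: "('a::field \<Rightarrow> int) \<Rightarrow> 'a \<Rightarrow> bool" where
  "ounit v x \<longleftrightarrow> x \<noteq> 0 \<and> v x = 0"

definition residue_reps :: "('a::field \<Rightarrow> int) \<Rightarrow> 'a set \<Rightarrow> bool" where
  "residue_reps v R \<longleftrightarrow> R \<subseteq> {x. vge v x 0} \<and>
      (\<forall>x. vge v x 0 \<longrightarrow> (\<exists>!r. r \<in> R \<and> vge v (x - r) 1))"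

text \<open>Non-archimedean local field of characteristic zero (char 0 is the type class),
  with odd residue cardinality: a complete discretely valued field with finite residue field.\<close>
definition nonarch_local_field_odd :: "('a::field_char_0 \<Rightarrow> int) \<Rightarrow> bool" where
  "nonarch_local_field_odd v \<longleftrightarrow>
     (\<forall>x y. x \<noteq> 0 \<longrightarrow> y \<noteq> 0 \<longrightarrow> v (x*y) = v x + v y) \<and>
     (\<forall>x y. x \<noteq> 0 \<longrightarrow> y \<noteq> 0 \<longrightarrow> x + y \<noteq> 0 \<longrightarrow> min (v x) (v y) \<le> v (x + y)) \<and>
     (\<exists>p. p \<noteq> 0 \<and> v p = 1) \<and>
     (\<forall>X::nat \<Rightarrow> 'a. (\<forall>k. \<exists>N. \<forall>m\<ge>N. \<forall>n\<ge>N. vge v (X m - X n) k) \<longrightarrow>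
          (\<exists>L. \<forall>k. \<exists>N. \<forall>n\<ge>N. vge v (X n - L) k)) \<and>
     (\<exists>R. finite R \<and> residue_reps v R \<and> odd (card R))"

definition Uset :: "('a::field \<Rightarrow> int) \<Rightarrow> nat \<Rightarrow> 'a set" where
  "Uset v m = {x. ounit v x \<and> vge v (x - 1) (int m)}"

definition level0_add_char :: "('a::field \<Rightarrow> int) \<Rightarrow> ('a \<Rightarrow> complex) \<Rightarrow> bool" where
  "level0_add_char v \<psi> \<longleftrightarrow> (\<forall>x y. \<psi> (x + y) = \<psi> x * \<psi> y) \<and> (\<forall>x. cmod (\<psi> x) = 1) \<and>
     (\<forall>x. vge v x 0 \<longrightarrow> \<psi> x = 1) \<and> (\<exists>x. vge v x (-1) \<and> \<psi> x \<noteq> 1)"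

section \<open>The unramified quadratic extension E = F(sqrt(-alpha)), elements (x,y) = x + y sqrt(-alpha)\<close>

definition emul :: "'a::field \<Rightarrow> 'a \<times> 'a \<Rightarrow> 'a \<times> 'a \<Rightarrow> 'a \<times> 'a" where
  "emul \<alpha> = (\<lambda>(x,y) (x',y'). (x*x' - \<alpha>*y*y', x*y' + y*x'))"

definition eadd :: "'a::field \<times> 'a \<Rightarrow> 'a \<times> 'a \<Rightarrow> 'a \<times> 'a" where
  "eadd = (\<lambda>(x,y) (x',y'). (x+x', y+y'))"

definition escal :: "'a::field \<Rightarrow> 'a \<times> 'a \<Rightarrow> 'a \<times> 'a" where
  "escal c = (\<lambda>(x,y). (c*x, c*y))"

definition eone :: "'a::field \<times> 'a" where "eone = (1, 0)"
definition esqrt :: "'a::field \<times> 'a" where "esqrt = (0, 1)"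

definition eTr :: "'a::field \<times> 'a \<Rightarrow> 'a" where "eTr = (\<lambda>(x,y). 2*x)"

text \<open>E-valuation: v_E(x + y sqrt(-alpha)) = min(v x, v y) since E/F is unramified.\<close>
definition E_vge :: "('a::field \<Rightarrow> int) \<Rightarrow> 'a \<times> 'a \<Rightarrow> int \<Rightarrow> bool" where
  "E_vge v z k \<longleftrightarrow> vge v (fst z) k \<and> vge v (snd z) k"

definition E_units_level :: "('a::field \<Rightarrow> int) \<Rightarrow> nat \<Rightarrow> ('a \<times> 'a) set" where
  "E_units_level v m = (if m = 0 then {z. E_vge v z 0 \<and> \<not> E_vge v z 1}
                        else {z. E_vge v (fst z - 1, snd z) (int m)})"

definition E_char :: "('a::field \<Rightarrow> int) \<Rightarrow> 'a \<Rightarrow> ('a \<times> 'a \<Rightarrow> complex) \<Rightarrow> bool" where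
  "E_char v \<alpha> \<theta> \<longleftrightarrow>
     (\<forall>z w. z \<noteq> (0,0) \<longrightarrow> w \<noteq> (0,0) \<longrightarrow> \<theta> (emul \<alpha> z w) = \<theta> z * \<theta> w) \<and>
     (\<forall>z. z \<noteq> (0,0) \<longrightarrow> \<theta> z \<noteq> 0) \<and>
     (\<exists>m. \<forall>z \<in> E_units_level v m. \<theta> z = 1)"

definition E_conductor :: "('a::field \<Rightarrow> int) \<Rightarrow> ('a \<times> 'a \<Rightarrow> complex) \<Rightarrow> nat" where
  "E_conductor v \<theta> = (LEAST m. \<forall>z \<in> E_units_level v m. \<theta> z = 1)"

text \<open>a_{theta,T}: a unit with psi_E(pi^-n a sqrt(-alpha) u) = theta(1 + pi^n u) for u in o_E.\<close>
definition is_a_theta :: "('a::field \<Rightarrow> int) \<Rightarrow> 'a \<Rightarrow> ('a \<Rightarrow> complex) \<Rightarrow> 'a \<Rightarrow> nat \<Rightarrow>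
      ('a \<times> 'a \<Rightarrow> complex) \<Rightarrow> 'a \<Rightarrow> bool" where
  "is_a_theta v \<alpha> \<psi> \<pi> n \<theta> a \<longleftrightarrow> ounit v a \<and>
     (\<forall>u. E_vge v u 0 \<longrightarrow>
        \<psi> (eTr (escal (inverse (\<pi>^n) * a) (emul \<alpha> esqrt u))) = \<theta> (eadd eone (escal (\<pi>^n) u)))"

definition M2o :: "('a::field \<Rightarrow> int) \<Rightarrow> 'a m2 set" where
  "M2o v = {(a,b,c,d). vge v a 0 \<and> vge v b 0 \<and> vge v c 0 \<and> vge v d 0}"

definition GL2o :: "('a::field \<Rightarrow> int) \<Rightarrow> 'a m2 set" where
  "GL2o v = {g \<in> M2o v. ounit v (m2det g)}"

definition Kn :: "('a::field \<Rightarrow> int) \<Rightarrow> nat \<Rightarrow> 'a m2 set" where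
  "Kn v m = {(a,b,c,d) \<in> GL2o v. vge v (a - 1) (int m) \<and> vge v b (int m) \<and>
                                 vge v c (int m) \<and> vge v (d - 1) (int m)}"

definition K1 :: "('a::field \<Rightarrow> int) \<Rightarrow> nat \<Rightarrow> 'a m2 set" where
  "K1 v r = {(a,b,c,d) \<in> GL2o v. vge v (a - 1) (int r) \<and> vge v c (int r)}"

text \<open>Inert torus T_alpha in canonical form and the embedding E^x -> T_alpha.\<close>
definition tmat :: "'a::field \<Rightarrow> 'a \<times> 'a \<Rightarrow> 'a m2" where
  "tmat \<alpha> = (\<lambda>(x,y). (x, y, -\<alpha>*y, x))"

definition torus :: "'a::field \<Rightarrow> 'a m2 set" where
  "torus \<alpha> = {tmat \<alpha> z | z. z \<noteq> (0,0)}"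

definition walpha :: "'a::field \<Rightarrow> 'a m2" where "walpha \<alpha> = (0, 1, -\<alpha>, 0)"

text \<open>Z K_T(n) = T K(n).\<close>
definition ZKT :: "('a::field \<Rightarrow> int) \<Rightarrow> 'a \<Rightarrow> nat \<Rightarrow> 'a m2 set" where
  "ZKT v \<alpha> n = {m2mult t k | t k. t \<in> torus \<alpha> \<and> k \<in> Kn v n}"

definition chiT :: "('a::field \<Rightarrow> int) \<Rightarrow> 'a \<Rightarrow> ('a \<Rightarrow> complex) \<Rightarrow> 'a \<Rightarrow> nat \<Rightarrow>
      ('a \<times> 'a \<Rightarrow> complex) \<Rightarrow> 'a \<Rightarrow> 'a m2 \<Rightarrow> complex" where
  "chiT v \<alpha> \<psi> \<pi> n \<theta> a k = (SOME c. \<exists>z g. z \<noteq> (0,0) \<and> g \<in> M2o v \<and>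
       k = m2mult (tmat \<alpha> z) (m2add m2one (m2smul (\<pi>^n) g)) \<and>
       c = \<theta> z * \<psi> (inverse (\<pi>^n) * a * m2trace (m2mult (walpha \<alpha>) g)))"

section \<open>Representations realised on spaces of functions on GL2, right translation\<close>

definition G_space :: "('a::field m2 \<Rightarrow> complex) set \<Rightarrow> bool" where
  "G_space V \<longleftrightarrow> (\<lambda>_. 0) \<in> V \<and>
     (\<forall>f\<in>V. \<forall>f'\<in>V. (\<lambda>h. f h + f' h) \<in> V) \<and>
     (\<forall>c. \<forall>f\<in>V. (\<lambda>h. c * f h) \<in> V) \<and>
     (\<forall>g\<in>GL2. \<forall>f\<in>V. rtrans g f \<in> V)"

definition rep_iso :: "('a::field m2 \<Rightarrow> complex) set \<Rightarrow> ('a m2 \<Rightarrow> complex) set \<Rightarrow> bool" where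
  "rep_iso A B \<longleftrightarrow> (\<exists>\<Phi>. bij_betw \<Phi> A B \<and>
     (\<forall>f\<in>A. \<forall>f'\<in>A. \<Phi> (\<lambda>h. f h + f' h) = (\<lambda>h. \<Phi> f h + \<Phi> f' h)) \<and>
     (\<forall>c. \<forall>f\<in>A. \<Phi> (\<lambda>h. c * f h) = (\<lambda>h. c * \<Phi> f h)) \<and>
     (\<forall>g\<in>GL2. \<forall>f\<in>A. \<Phi> (rtrans g f) = rtrans g (\<Phi> f)))"

text \<open>Compact induction c-Ind_H^G chi (functions vanishing off G).\<close>
definition cInd :: "'a::field m2 set \<Rightarrow> ('a m2 \<Rightarrow> complex) \<Rightarrow> ('a m2 \<Rightarrow> complex) set" where
  "cInd H \<chi> = {f. (\<forall>g. g \<notin> GL2 \<longrightarrow> f g = 0) \<and>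
      (\<forall>h\<in>H. \<forall>g\<in>GL2. f (m2mult h g) = \<chi> h * f g) \<and>
      (\<exists>S. finite S \<and> S \<subseteq> GL2 \<and>
         (\<forall>g\<in>GL2. f g \<noteq> 0 \<longrightarrow> (\<exists>h\<in>H. \<exists>s\<in>S. g = m2mult h s)))}"

definition whittaker_space :: "('a::field \<Rightarrow> complex) \<Rightarrow> ('a m2 \<Rightarrow> complex) set \<Rightarrow> bool" where
  "whittaker_space \<psi> V \<longleftrightarrow> G_space V \<and>
     (\<forall>W\<in>V. \<forall>g. g \<notin> GL2 \<longrightarrow> W g = 0) \<and>
     (\<forall>W\<in>V. \<forall>x g. W (m2mult (nmat x) g) = \<psi> x * W g)"

definition irreducible_rep :: "('a::field m2 \<Rightarrow> complex) set \<Rightarrow> bool" where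
  "irreducible_rep V \<longleftrightarrow> V \<noteq> {\<lambda>_. 0} \<and>
     (\<forall>U. U \<subseteq> V \<longrightarrow> G_space U \<longrightarrow> U = {\<lambda>_. 0} \<or> U = V)"

definition smooth_rep :: "('a::field \<Rightarrow> int) \<Rightarrow> ('a m2 \<Rightarrow> complex) set \<Rightarrow> bool" where
  "smooth_rep v V \<longleftrightarrow> (\<forall>W\<in>V. \<exists>m. \<forall>k\<in>Kn v m. rtrans k W = W)"

definition fin_dim :: "('b \<Rightarrow> complex) set \<Rightarrow> bool" where
  "fin_dim S \<longleftrightarrow> (\<exists>B. finite B \<and> B \<subseteq> S \<and> (\<forall>f\<in>S. \<exists>c. f = (\<lambda>h. \<Sum>b\<in>B. c b * b h)))"

definition admissible_rep :: "('a::field \<Rightarrow> int) \<Rightarrow> ('a m2 \<Rightarrow> complex) set \<Rightarrow> bool" where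
  "admissible_rep v V \<longleftrightarrow> (\<forall>m. fin_dim {W\<in>V. \<forall>k\<in>Kn v m. rtrans k W = W})"

text \<open>Supercuspidal: irreducible smooth admissible with vanishing Jacquet module
  (Jacquet's criterion: every vector integrates to zero over some compact open subgroup of N).\<close>
definition supercuspidal :: "('a::field \<Rightarrow> int) \<Rightarrow> ('a m2 \<Rightarrow> complex) set \<Rightarrow> bool" where
  "supercuspidal v V \<longleftrightarrow> irreducible_rep V \<and> smooth_rep v V \<and> admissible_rep v V \<and>
     (\<forall>W\<in>V. \<exists>(l::int) (j::int) R. l \<le> j \<and>
        (\<forall>x. vge v x j \<longrightarrow> rtrans (nmat x) W = W) \<and>
        finite R \<and> (\<forall>r\<in>R. vge v r l) \<and>
        (\<forall>x. vge v x l \<longrightarrow> (\<exists>!r. r \<in> R \<and> vge v (x - r) j)) \<and>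
        (\<forall>g. (\<Sum>r\<in>R. W (m2mult g (nmat r))) = 0))"

definition trivial_central_char :: "('a::field m2 \<Rightarrow> complex) set \<Rightarrow> bool" where
  "trivial_central_char V \<longleftrightarrow> (\<forall>z. z \<noteq> 0 \<longrightarrow> (\<forall>W\<in>V. rtrans (scal z) W = W))"

definition rep_conductor :: "('a::field \<Rightarrow> int) \<Rightarrow> ('a m2 \<Rightarrow> complex) set \<Rightarrow> nat" where
  "rep_conductor v V = (LEAST r. \<exists>W\<in>V. W \<noteq> (\<lambda>_. 0) \<and> (\<forall>k\<in>K1 v r. rtrans k W = W))"

end

theory Submission
  imports Defs
begin


locale valu = fixes v :: "'a::field \<Rightarrow> int"
  assumes VM: "\<And>x y. x\<noteq>0 \<Longrightarrow> y\<noteq>0 \<Longrightarrow> v(x*y) = v x + v y"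
  and VU: "\<And>x y. x\<noteq>0 \<Longrightarrow> y\<noteq>0 \<Longrightarrow> x+y\<noteq>0 \<Longrightarrow> min (v x) (v y) \<le> v (x+y)"
begin

lemma v1: "v 1 = 0" using VM[of 1 1] by simp

lemma vm1: "v (-1) = 0"
proof -
  have "v ((-1)*(-1)) = v (-1) + v (-1)" by (rule VM) auto
  then show ?thesis using v1 by simp
qed

lemma vneg: "x \<noteq> 0 \<Longrightarrow> v (-x) = v x"
  using VM[of "-1" x] vm1 by simp

lemma vinv: "x \<noteq> 0 \<Longrightarrow> v (inverse x) = - v x"
  using VM[of x "inverse x"] v1 by simp

lemma vge_zero[simp]: "vge v 0 k" by (simp add: vge_def)
lemma vge_one: "vge v 1 0" by (simp add: vge_def v1)

lemma vge_add: "vge v x k \<Longrightarrow> vge v y k \<Longrightarrow> vge v (x+y) k"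
  unfolding vge_def using VU[of x y] by (cases "x=0"; cases "y=0"; cases "x+y=0") auto

lemma vge_neg: "vge v x k \<Longrightarrow> vge v (-x) k"
  unfolding vge_def using vneg[of x] by (cases "x=0") auto

lemma vge_diff: "vge v x k \<Longrightarrow> vge v y k \<Longrightarrow> vge v (x-y) k"
  using vge_add[of x k "-y"] vge_neg[of y k] by simp

lemma vge_mult: "vge v x k \<Longrightarrow> vge v y l \<Longrightarrow> vge v (x*y) (k+l)"
  unfolding vge_def using VM[of x y] by (cases "x=0"; cases "y=0") auto

lemma vge_mono: "vge v x k \<Longrightarrow> l \<le> k \<Longrightarrow> vge v x l"
  unfolding vge_def by auto

lemma vge_mult0: "vge v x k \<Longrightarrow> vge v y 0 \<Longrightarrow> vge v (x*y) k"
  using vge_mult[of x k y 0] by simp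

lemma vpow: "p \<noteq> 0 \<Longrightarrow> v (p ^ n) = int n * v p"
  by (induction n) (auto simp: VM v1 algebra_simps)

lemma close1_unit: assumes "vge v (x - 1) 1" shows "x \<noteq> 0 \<and> v x = 0"
proof -
  have x0: "x \<noteq> 0"
  proof
    assume "x = 0" then have "vge v (-1) 1" using assms by simp
    then show False using vm1 by (simp add: vge_def)
  qed
  show ?thesis
  proof (cases "x = 1")
    case True then show ?thesis using v1 by simp
  next
    case False
    let ?e = "x - 1"
    have e0: "?e \<noteq> 0" using False by simp
    have ve: "v ?e \<ge> 1" using assms e0 by (simp add: vge_def)
    have "min (v 1) (v ?e) \<le> v (1 + ?e)" by (rule VU) (use e0 x0 in auto)
    then have a: "0 \<le> v x" using v1 ve by simp
    have "min (v x) (v (- ?e)) \<le> v (x + - ?e)" by (rule VU) (use e0 x0 in auto)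
    then have "min (v x) (v ?e) \<le> 0" using vneg[OF e0] v1 by simp
    then have "v x \<le> 0" using ve by linarith
    then show ?thesis using a x0 by simp
  qed
qed

lemma unit_inv0: "x \<noteq> 0 \<Longrightarrow> v x = 0 \<Longrightarrow> vge v (inverse x) 0"
  using vinv by (simp add: vge_def)

lemma chi_val:
  assumes pi: "\<pi> \<noteq> 0" "v \<pi> = 1" and n: "1 \<le> n"
    and psiadd: "\<And>x y. \<psi> (x+y) = \<psi> x * \<psi> y" and psi0: "\<And>x. vge v x 0 \<Longrightarrow> \<psi> x = 1"
    and th1: "\<theta> (1,0) = 1"
    and aT: "is_a_theta v \<alpha> \<psi> \<pi> n \<theta> a"
    and al: "vge v \<alpha> 0"
    and p: "vge v p11 0" "vge v p12 0" "vge v p21 0" "vge v p22 0"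
  shows "chiT v \<alpha> \<psi> \<pi> n \<theta> a (1+\<pi>^n*p11, \<pi>^n*p12, \<pi>^n*p21, 1+\<pi>^n*p22)
         = \<psi> (inverse (\<pi>^n) * a * (p21 - \<alpha>*p12))"
proof -
  define e where "e = \<pi>^n"
  have e0: "e \<noteq> 0" using pi by (simp add: e_def)
  have ve: "v e = int n" using vpow[OF pi(1)] pi by (simp add: e_def)
  have vgee: "vge v e 1" using ve n by (simp add: vge_def)
  define T where "T = \<psi> (inverse e * a * (p21 - \<alpha>*p12))"
  define k where "k = (1+e*p11, e*p12, e*p21, 1+e*p22)"
  define P where "P = (\<lambda>c. \<exists>z g. z \<noteq> (0,0) \<and> g \<in> M2o v \<and>
       k = m2mult (tmat \<alpha> z) (m2add m2one (m2smul (\<pi>^n) g)) \<and>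
       c = \<theta> z * \<psi> (inverse (\<pi>^n) * a * m2trace (m2mult (walpha \<alpha>) g)))"
  have ex: "P T"
    unfolding P_def
    apply (rule exI[of _ "(1,0)"], rule exI[of _ "(p11,p12,p21,p22)"])
    using p th1 by (simp add: M2o_def k_def e_def tmat_def m2mult_def m2add_def m2one_def m2smul_def
        m2trace_def walpha_def T_def)
  have uniq: "c = T" if Pc: "P c" for c
  proof -
    obtain z1 z2 g11 g12 g21 g22 where
      g: "vge v g11 0" "vge v g12 0" "vge v g21 0" "vge v g22 0" and
      keq: "k = m2mult (tmat \<alpha> (z1,z2)) (m2add m2one (m2smul e (g11,g12,g21,g22)))" and
      c: "c = \<theta> (z1,z2) * \<psi> (inverse e * a * (g21 - \<alpha>*g12))"
    proof -
      from Pc obtain z g where zg: "g \<in> M2o v"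
        "k = m2mult (tmat \<alpha> z) (m2add m2one (m2smul e g))"
        "c = \<theta> z * \<psi> (inverse e * a * m2trace (m2mult (walpha \<alpha>) g))"
        unfolding P_def e_def by auto
      obtain z1 z2 where "z = (z1,z2)" by (cases z)
      moreover obtain g11 g12 g21 g22 where "g = (g11,g12,g21,g22)" by (cases g) auto
      ultimately show ?thesis using that zg
        by (auto simp: M2o_def m2trace_def m2mult_def walpha_def)
    qed
    have e1: "1+e*p11 = z1*(1+e*g11) + z2*(e*g21)"
     and e2: "e*p12 = z1*(e*g12) + z2*(1+e*g22)"
     and e3: "e*p21 = -\<alpha>*z2*(1+e*g11) + z1*(e*g21)"
      using keq by (auto simp: k_def tmat_def m2mult_def m2add_def m2one_def m2smul_def algebra_simps)
    define d where "d = (1+e*g11)*(1+e*g22) - (e*g12)*(e*g21)"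
    have d1: "d - 1 = e*(g11 + g22 + e*g11*g22 - e*g12*g21)" by (simp add: d_def algebra_simps)
    have "vge v (d - 1) 1" unfolding d1
      using vge_mult[OF vgee, of "g11 + g22 + e*g11*g22 - e*g12*g21" 0] g vgee
      by (simp add: vge_add vge_diff vge_mult0 vge_mono[OF vgee, of 0] mult.assoc)
    then have du: "d \<noteq> 0" "v d = 0" using close1_unit by auto
    have id: "inverse d * d = 1" using du by simp
    define u1 where "u1 = ((p11-g11)*(1+e*g22) - (p12-g12)*(e*g21)) * inverse d"
    define u2 where "u2 = (p12*(1+e*g11) - (1+e*p11)*g12) * inverse d"
    have "d*(z1 - 1) = e*((p11-g11)*(1+e*g22) - (p12-g12)*(e*g21))"
      unfolding d_def using e1 e2 by algebra
    then have z1: "z1 = 1 + e*u1" using du unfolding u1_def by (simp add: field_simps)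
    have "d*z2 = e*(p12*(1+e*g11) - (1+e*p11)*g12)"
      unfolding d_def using e1 e2 by algebra
    then have z2: "z2 = e*u2" using du unfolding u2_def by (simp add: field_simps)
    have e0': "vge v e 0" using vge_mono[OF vgee] by simp
    have iv: "vge v (inverse d) 0" using unit_inv0 du by simp
    have u1i: "vge v u1 0" unfolding u1_def
      using g p e0' iv by (intro vge_mult0 vge_diff vge_add) (auto intro: vge_mult0 vge_add vge_diff vge_one)
    have u2i: "vge v u2 0" unfolding u2_def
      using g p e0' iv by (intro vge_mult0 vge_diff vge_add) (auto intro: vge_mult0 vge_add vge_diff vge_one)
    have "\<psi> (eTr (escal (inverse e * a) (emul \<alpha> esqrt (u1,u2)))) = \<theta> (eadd eone (escal e (u1,u2)))"
      using aT u1i u2i unfolding is_a_theta_def E_vge_def e_def by auto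
    then have th: "\<theta> (z1,z2) = \<psi> (inverse e * a * (-2*\<alpha>*u2))"
      by (simp add: eTr_def escal_def emul_def esqrt_def eadd_def eone_def z1 z2 algebra_simps)
    define R where "R = -\<alpha>*u2*g11 + u1*g21 - \<alpha>*u1*g12 - \<alpha>*u2*g22"
    have "e*(p21 - \<alpha>*p12) = e*(g21 - \<alpha>*g12 - 2*\<alpha>*u2 + e*R)"
      using e2 e3 unfolding z1 z2 R_def by (simp add: algebra_simps)
    then have pe: "p21 - \<alpha>*p12 = g21 - \<alpha>*g12 - 2*\<alpha>*u2 + e*R" using e0 by simp
    have "inverse e * a * (p21 - \<alpha>*p12) = inverse e * a * (-2*\<alpha>*u2) + inverse e * a * (g21 - \<alpha>*g12) + a*R"
      unfolding pe using e0 by (simp add: field_simps)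
    moreover have "vge v (a*R) 0"
    proof -
      have a0: "vge v a 0" using aT by (simp add: is_a_theta_def ounit_def vge_def)
      have "vge v R 0" unfolding R_def using al u1i u2i g
        by (intro vge_diff vge_add vge_mult0; simp add: vge_neg vge_mult0)
      then show ?thesis using vge_mult[OF a0] by fastforce
    qed
    ultimately have "T = \<psi> (inverse e * a * (-2*\<alpha>*u2)) * \<psi> (inverse e * a * (g21 - \<alpha>*g12))"
      unfolding T_def using psiadd[of "inverse e * a * (-2*\<alpha>*u2) + inverse e * a * (g21 - \<alpha>*g12)" "a*R"]
        psiadd[of "inverse e * a * (-2*\<alpha>*u2)" "inverse e * a * (g21 - \<alpha>*g12)"] psi0[of "a*R"]
      by (simp del: mult_minus_left mult_minus_right minus_mult_left minus_mult_right)
    then show ?thesis using c th by simp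
  qed
  have "(SOME c. P c) = T" using someI_ex[of P] ex uniq by blast
  moreover have "chiT v \<alpha> \<psi> \<pi> n \<theta> a (1+\<pi>^n*p11, \<pi>^n*p12, \<pi>^n*p21, 1+\<pi>^n*p22) = (SOME c. P c)"
    unfolding chiT_def P_def k_def e_def by (rule refl)
  ultimately show ?thesis unfolding T_def e_def by simp
qed

lemma kmem:
  assumes pi: "\<pi> \<noteq> 0" "v \<pi> = 1" and n: "1 \<le> n"
    and p: "vge v p11 0" "vge v p12 0" "vge v p21 0" "vge v p22 0"
  shows "(1+\<pi>^n*p11, \<pi>^n*p12, \<pi>^n*p21, 1+\<pi>^n*p22) \<in> ZKT v \<alpha> n"
proof -
  define e where "e = \<pi>^n"
  have ve: "v e = int n" using vpow[OF pi(1)] pi by (simp add: e_def)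
  have e0: "e \<noteq> 0" using pi by (simp add: e_def)
  have vgen: "vge v e n" using ve by (simp add: vge_def)
  have vgee: "vge v e 1" using ve n by (simp add: vge_def)
  have e0': "vge v e 0" using vge_mono[OF vgee] by simp
  have en: "vge v (e*p) (int n)" if "vge v p 0" for p using vge_mult0[OF vgen that] .
  have e0p: "vge v (e*p) 0" if "vge v p 0" for p using vge_mult0[OF e0' that] .
  have one: "vge v (1 + e*p) 0" if "vge v p 0" for p using vge_add[OF vge_one e0p[OF that]] .
  have "m2det (1+e*p11, e*p12, e*p21, 1+e*p22) - 1 = e*(p11 + p22 + e*p11*p22 - e*p12*p21)"
    by (simp add: m2det_def algebra_simps)
  moreover have "vge v (e*(p11 + p22 + e*p11*p22 - e*p12*p21)) 1"
    using vge_mult[OF vgee, of "p11 + p22 + e*p11*p22 - e*p12*p21" 0] p e0'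
    by (simp add: vge_add vge_diff vge_mult0 mult.assoc)
  ultimately have "ounit v (m2det (1+e*p11, e*p12, e*p21, 1+e*p22))"
    using close1_unit unfolding ounit_def by metis
  then have K: "(1+e*p11, e*p12, e*p21, 1+e*p22) \<in> Kn v n"
    unfolding Kn_def GL2o_def M2o_def using p en e0p one by auto
  have "(1+e*p11, e*p12, e*p21, 1+e*p22) = m2mult (tmat \<alpha> (1,0)) (1+e*p11, e*p12, e*p21, 1+e*p22)"
    by (simp add: m2mult_def tmat_def)
  moreover have "tmat \<alpha> (1,0) \<in> torus \<alpha>" unfolding torus_def
    by (rule CollectI, rule exI[of _ "(1,0)"]) simp
  ultimately show ?thesis using K unfolding ZKT_def e_def by blast
qed

end

theorem proposition2p14:
  fixes v :: "'a::field_char_0 \<Rightarrow> int"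
    and \<psi> :: "'a \<Rightarrow> complex"
    and \<pi> \<alpha> a :: 'a
    and n :: nat
    and \<theta> :: "'a \<times> 'a \<Rightarrow> complex"
    and V :: "('a m2 \<Rightarrow> complex) set"
    and W0 :: "'a m2 \<Rightarrow> complex"
  assumes F: "nonarch_local_field_odd v"
    and unif: "\<pi> \<noteq> 0" "v \<pi> = 1"
    and psi: "level0_add_char v \<psi>"
    and alpha: "ounit v \<alpha>" "\<not> (\<exists>s. s * s = - \<alpha>)"
    and n: "1 \<le> n"
    and theta: "E_char v \<alpha> \<theta>" "E_conductor v \<theta> = 2 * n"
               "\<forall>x. x \<noteq> 0 \<longrightarrow> \<theta> (x, 0) = 1"
    and aT: "is_a_theta v \<alpha> \<psi> \<pi> n \<theta> a"
    and Wh: "whittaker_space \<psi> V"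
    and sc: "supercuspidal v V"
    and cc: "trivial_central_char V"
    and cond: "rep_conductor v V = 4 * n"
    and ind: "rep_iso (cInd (ZKT v \<alpha> n) (chiT v \<alpha> \<psi> \<pi> n \<theta> a)) V"
    and W0: "W0 \<in> V" "W0 \<noteq> (\<lambda>_. 0)"
            "\<forall>k\<in>ZKT v \<alpha> n. rtrans k W0 = (\<lambda>h. chiT v \<alpha> \<psi> \<pi> n \<theta> a k * W0 h)"
  shows "\<exists>c::complex. \<forall>y. y \<noteq> 0 \<longrightarrow>
           W0 (amat y) = (if y \<in> (\<lambda>u. inverse (\<pi> ^ (2 * n)) * (- a * \<alpha>) * u) ` Uset v n
                          then c else 0)"
proof -
  interpret valu v
    using F unfolding nonarch_local_field_odd_def by unfold_locales auto
  have psiadd: "\<And>x y. \<psi> (x+y) = \<psi> x * \<psi> y" and psi0: "\<And>x. vge v x 0 \<Longrightarrow> \<psi> x = 1"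
    and psin: "\<And>x. \<psi> x \<noteq> 0"
    using psi unfolding level0_add_char_def by (auto, metis norm_zero zero_neq_one)
  obtain w where w: "vge v w (-1)" "\<psi> w \<noteq> 1" using psi unfolding level0_add_char_def by auto
  have th1: "\<theta> (1,0) = 1" using theta(3) by simp
  have al: "vge v \<alpha> 0" using alpha(1) by (simp add: ounit_def vge_def)
  have a0: "a \<noteq> 0" "v a = 0" using aT by (auto simp: is_a_theta_def ounit_def)
  define e where "e = \<pi>^n"
  have ve: "v e = int n" using vpow[OF unif(1)] unif by (simp add: e_def)
  have e0: "e \<noteq> 0" using unif by (simp add: e_def)
  define A where "A = inverse (\<pi> ^ (2 * n)) * (- a * \<alpha>)"
  have Ae: "A = inverse e * inverse e * (- a * \<alpha>)"
    unfolding A_def e_def by (simp add: power_mult_distrib mult_2 power_add)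
  have A0: "A \<noteq> 0" using Ae e0 a0 alpha(1) by (simp add: ounit_def)
  have vA: "v A = - 2 * int n"
  proof -
    have "v (inverse e * inverse e) = - 2 * int n" using VM[of "inverse e" "inverse e"] vinv[OF e0] ve e0 by simp
    moreover have "v (- a * \<alpha>) = 0" using VM[of "-a" \<alpha>] vneg[of a] a0 alpha(1) by (simp add: ounit_def)
    ultimately show ?thesis unfolding Ae using VM[of "inverse e * inverse e" "- a * \<alpha>"] e0 a0 alpha(1)
      by (simp add: ounit_def)
  qed
  have key: "W0 (m2mult (amat y) k) = chiT v \<alpha> \<psi> \<pi> n \<theta> a k * W0 (amat y)" if "k \<in> ZKT v \<alpha> n" for y k
    using W0(3) that unfolding rtrans_def by (metis (no_types, lifting))
  have wh: "W0 (m2mult (nmat x) g) = \<psi> x * W0 g" for x g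
    using Wh W0(1) unfolding whittaker_space_def by blast
  have step1: "\<psi> ((y - A) * x) = 1" if "W0 (amat y) \<noteq> 0" "vge v x n" for x y
  proof -
    have x0: "vge v (x * inverse e) 0" using that(2) vinv[OF e0] ve
      using vge_mult[OF that(2), of "inverse e" "- int n"] by (simp add: vge_def)
    have nm: "nmat x = (1+\<pi>^n*0, \<pi>^n*(x * inverse e), \<pi>^n*0, 1+\<pi>^n*0)"
      using e0 by (simp add: nmat_def e_def)
    have ch: "chiT v \<alpha> \<psi> \<pi> n \<theta> a (nmat x) = \<psi> (A * x)"
    proof -
      have "chiT v \<alpha> \<psi> \<pi> n \<theta> a (nmat x) = \<psi> (inverse (\<pi>^n) * a * (0 - \<alpha>*(x * inverse e)))"
        unfolding nm by (rule chi_val[OF unif n psiadd psi0 th1 aT al]) (use x0 in auto)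
      moreover have "inverse (\<pi>^n) * a * (0 - \<alpha>*(x * inverse e)) = A * x"
        unfolding Ae e_def by (simp add: algebra_simps)
      ultimately show ?thesis by simp
    qed
    have mem: "nmat x \<in> ZKT v \<alpha> n" unfolding nm by (rule kmem[OF unif n]) (use x0 in auto)
    have "m2mult (amat y) (nmat x) = m2mult (nmat (y*x)) (amat y)"
      by (simp add: m2mult_def amat_def nmat_def)
    then have "\<psi> (y*x) * W0 (amat y) = \<psi> (A * x) * W0 (amat y)"
      using key[OF mem, of y] wh[of "y*x" "amat y"] ch by simp
    then have "\<psi> (y*x) = \<psi> (A*x)" using that(1) by simp
    moreover have "\<psi> (y*x) = \<psi> ((y - A) * x) * \<psi> (A*x)"
      using psiadd[of "(y - A) * x" "A*x"] by (simp add: algebra_simps)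
    ultimately show ?thesis using psin[of "A*x"] by simp
  qed
  have step2: "y \<in> (\<lambda>u. A * u) ` Uset v n" if "W0 (amat y) \<noteq> 0" for y
  proof -
    have c1: "vge v (y - A) (- int n)"
    proof (rule ccontr)
      assume "\<not> ?thesis"
      then have z0: "y - A \<noteq> 0" and vz: "v (y - A) < - int n" by (auto simp: vge_def)
      have w0: "w \<noteq> 0" using w psi0 by auto
      define x where "x = w * inverse (y - A)"
      have "v x = v w - v (y - A)" unfolding x_def using VM[of w "inverse (y-A)"] vinv[OF z0] w0 z0 by simp
      moreover have "v w \<ge> -1" using w w0 by (simp add: vge_def)
      ultimately have "vge v x n" using vz by (simp add: vge_def)
      then have "\<psi> ((y - A) * x) = 1" using step1 that by blast
      moreover have "(y - A) * x = w" unfolding x_def using z0 by (simp add: field_simps)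
      ultimately show False using w by simp
    qed
    define u where "u = y * inverse A"
    have "u - 1 = (y - A) * inverse A" unfolding u_def using A0 by (simp add: field_simps)
    moreover have "vge v (inverse A) (2 * int n)" using vinv[OF A0] vA by (simp add: vge_def)
    ultimately have u1: "vge v (u - 1) (int n)" using vge_mult[OF c1, of "inverse A" "2 * int n"] by simp
    then have "ounit v u" using close1_unit vge_mono[OF u1, of 1] n unfolding ounit_def by simp
    then have "u \<in> Uset v n" using u1 by (simp add: Uset_def)
    moreover have "y = A * u" unfolding u_def using A0 by simp
    ultimately show ?thesis by blast
  qed
  have step3: "W0 (amat (y * u)) = W0 (amat y)" if "u \<in> Uset v n" for y u
  proof -
    have u1: "vge v (u - 1) (int n)" using that by (simp add: Uset_def)
    have x0: "vge v ((u - 1) * inverse e) 0" using vinv[OF e0] ve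
      using vge_mult[OF u1, of "inverse e" "- int n"] by (simp add: vge_def)
    have am: "amat u = (1+\<pi>^n*((u - 1) * inverse e), \<pi>^n*0, \<pi>^n*0, 1+\<pi>^n*0)"
      using e0 unif(1) by (simp add: amat_def e_def field_simps)
    have ch: "chiT v \<alpha> \<psi> \<pi> n \<theta> a (amat u) = 1"
    proof -
      have "chiT v \<alpha> \<psi> \<pi> n \<theta> a (amat u) = \<psi> (inverse (\<pi>^n) * a * (0 - \<alpha>*0))"
        unfolding am by (rule chi_val[OF unif n psiadd psi0 th1 aT al]) (use x0 in auto)
      then show ?thesis using psi0[of 0] by simp
    qed
    have mem: "amat u \<in> ZKT v \<alpha> n" unfolding am by (rule kmem[OF unif n]) (use x0 in auto)
    have "m2mult (amat y) (amat u) = amat (y * u)" by (simp add: m2mult_def amat_def)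
    then show ?thesis using key[OF mem, of y] ch by simp
  qed
  show ?thesis
  proof (rule exI[of _ "W0 (amat A)"], intro allI impI)
    fix y :: 'a assume "y \<noteq> 0"
    show "W0 (amat y) = (if y \<in> (\<lambda>u. inverse (\<pi> ^ (2 * n)) * (- a * \<alpha>) * u) ` Uset v n
                          then W0 (amat A) else 0)"
    proof (cases "y \<in> (\<lambda>u. A * u) ` Uset v n")
      case True
      then obtain u where "u \<in> Uset v n" "y = A * u" by blast
      then show ?thesis using step3[of u A] True unfolding A_def by auto
    next
      case False
      then show ?thesis using step2 unfolding A_def by auto
    qed
  qed
qed

end
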